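(* Let $\Gamma$ be an abelian group containing no element of order two. Let $M_1,M_2$ be matroids on a common ground set $E$, $\psi\colon E\to\Gamma$ a labeling, and $B$ a common basis of $M_1$ and $M_2$. If $C$ is a directed cycle of $D_{M_1,M_2}(B)$ with $\psi'(C)\neq 0$ such that no directed cycle $C'$ of $D_{M_1,M_2}(B)$ with $\psi'(C')\ne 0$ satisfies $V(C')\subsetneq V(C)$, then $B\triangle V(C)$ is a common basis of $M_1$ and $M_2$.
   Context: $\psi(S):=\sum_{x\in S}\psi(x)$. For a common basis $B$ of $M_1,M_2$, the digraph $D_{M_1,M_2}(B)$ has vertex set $E$ and arcs: for each $x\in B$, $y\in E\setminus B$ with $B-x+y$ a basis of $M_1$, an arc $xy$ with label $\psi'(xy):=\psi(y)$; and for each $x\in B$, $y\in E\setminus B$ with $B-x+y$ a basis of $M_2$, an arc $yx$ with label $\psi'(yx):=-\psi(x)$. The label $\psi'(C)$ of a directed cycle is the sum of the labels of its arcs; $C$ is non-zero if $\psi'(C)\neq0$. *)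

theory Defs
  imports Main
begin

definition matroid :: "'a set \<Rightarrow> 'a set set \<Rightarrow> bool" where
  "matroid E \<B> \<longleftrightarrow> finite E \<and> \<B> \<noteq> {} \<and> (\<forall>B\<in>\<B>. B \<subseteq> E) \<and>
     (\<forall>B1\<in>\<B>. \<forall>B2\<in>\<B>. \<forall>x\<in>B1 - B2. \<exists>y\<in>B2 - B1. insert y (B1 - {x}) \<in> \<B>)"

definition exch_arcs :: "'a set \<Rightarrow> 'a set set \<Rightarrow> 'a set set \<Rightarrow> 'a set \<Rightarrow> ('a \<times> 'a) set" where
  "exch_arcs E M1 M2 B =
     {(x, y) | x y. x \<in> B \<and> y \<in> E - B \<and> insert y (B - {x}) \<in> M1} \<union>
     {(y, x) | x y. x \<in> B \<and> y \<in> E - B \<and> insert y (B - {x}) \<in> M2}"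

definition arc_label :: "'a set \<Rightarrow> ('a \<Rightarrow> 'g::ab_group_add) \<Rightarrow> 'a \<times> 'a \<Rightarrow> 'g" where
  "arc_label B \<psi> a = (if fst a \<in> B then \<psi> (snd a) else - \<psi> (snd a))"

definition dcycle :: "('a \<times> 'a) set \<Rightarrow> 'a list \<Rightarrow> bool" where
  "dcycle A cs \<longleftrightarrow> cs \<noteq> [] \<and> distinct cs \<and>
     (\<forall>i < length cs. (cs ! i, cs ! ((i + 1) mod length cs)) \<in> A)"

definition cycle_label :: "'a set \<Rightarrow> ('a \<Rightarrow> 'g::ab_group_add) \<Rightarrow> 'a list \<Rightarrow> 'g" where
  "cycle_label B \<psi> cs = (\<Sum>i<length cs. arc_label B \<psi> (cs ! i, cs ! ((i + 1) mod length cs)))"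

end

theory Submission
  imports Defs "HOL-Library.Multiset"
begin

abbreviation arcsL :: "'a list \<Rightarrow> ('a \<times> 'a) list" where
  "arcsL cs \<equiv> zip cs (rotate1 cs)"

lemma set_arcsL: "set (arcsL cs) = {(cs ! i, cs ! (Suc i mod length cs)) | i. i < length cs}"
  by (auto simp: set_zip nth_rotate1)

lemma dcycle_alt: "dcycle A cs \<longleftrightarrow> cs \<noteq> [] \<and> distinct cs \<and> set (arcsL cs) \<subseteq> A"
  unfolding dcycle_def set_arcsL by auto

lemma cycle_label_alt: "cycle_label B \<psi> cs = sum_list (map (arc_label B \<psi>) (arcsL cs))"
  unfolding cycle_label_def by (simp add: sum_list_sum_nth atLeast0LessThan nth_rotate1)

lemma exch_arc_B: "(a,b) \<in> exch_arcs E M1 M2 B \<Longrightarrow> a \<in> B \<Longrightarrow> b \<notin> B \<and> b \<in> E \<and> insert b (B - {a}) \<in> M1"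
  by (auto simp: exch_arcs_def)
lemma exch_arc_nB: "(a,b) \<in> exch_arcs E M1 M2 B \<Longrightarrow> a \<notin> B \<Longrightarrow> b \<in> B \<and> a \<in> E"
  by (auto simp: exch_arcs_def)
lemma exch_arc_E: "(a,b) \<in> exch_arcs E M1 M2 B \<Longrightarrow> B \<subseteq> E \<Longrightarrow> a \<in> E \<and> b \<in> E"
  by (auto simp: exch_arcs_def)
lemma exch_arc_label: "(a,b) \<in> exch_arcs E M1 M2 B \<Longrightarrow> arc_label B \<psi> (a,b) = (if b \<in> B then - \<psi> b else \<psi> b)"
  by (auto simp: exch_arcs_def arc_label_def)
lemma exch_arcs_conv: "exch_arcs E M2 M1 B = (exch_arcs E M1 M2 B)\<inverse>"
  by (auto simp: exch_arcs_def)

lemma mset_rotate1[simp]: "mset (rotate1 xs) = mset xs"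
  by (cases xs) simp_all

lemma sum_list_rotate1: "sum_list (rotate1 xs) = (sum_list xs :: 'b::comm_monoid_add)"
  by (cases xs) (simp_all add: add.commute)

lemma label_vertex:
  assumes "dcycle (exch_arcs E M1 M2 B) cs"
  shows "cycle_label B \<psi> cs = (\<Sum>v\<in>set cs. if v \<in> B then - \<psi> v else \<psi> v)"
proof -
  let ?f = "\<lambda>v. if v \<in> B then - \<psi> v else \<psi> v"
  have d: "distinct cs" and s: "set (arcsL cs) \<subseteq> exch_arcs E M1 M2 B"
    using assms by (auto simp: dcycle_alt)
  have "map (arc_label B \<psi>) (arcsL cs) = map (?f \<circ> snd) (arcsL cs)"
  proof (rule map_cong[OF refl])
    fix a assume "a \<in> set (arcsL cs)"
    with s have "a \<in> exch_arcs E M1 M2 B" by auto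
    then show "arc_label B \<psi> a = (?f \<circ> snd) a" by (cases a) (simp add: exch_arc_label)
  qed
  also have "\<dots> = map ?f (rotate1 cs)" by (simp flip: map_map)
  finally have "cycle_label B \<psi> cs = sum_list (map ?f (rotate1 cs))" by (simp add: cycle_label_alt)
  also have "\<dots> = sum_list (map ?f cs)" by (simp flip: rotate1_map add: sum_list_rotate1)
  also have "\<dots> = (\<Sum>v\<in>set cs. ?f v)" using d by (simp add: sum_list_distinct_conv_sum_set)
  finally show ?thesis .
qed

lemma dcycle_rev:
  assumes "dcycle A cs" shows "dcycle (A\<inverse>) (rev cs)"
  unfolding dcycle_def
proof (intro conjI allI impI)
  show "rev cs \<noteq> []" "distinct (rev cs)" using assms by (auto simp: dcycle_def)
  fix i assume i: "i < length (rev cs)"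
  let ?n = "length cs"
  have n: "?n > 0" using i by auto
  define j where "j = ?n - 1 - (Suc i mod ?n)"
  have j: "j < ?n" using n by (simp add: j_def)
  have "(cs ! j, cs ! (Suc j mod ?n)) \<in> A" using assms j by (auto simp: dcycle_def)
  moreover have "rev cs ! i = cs ! (Suc j mod ?n)" "rev cs ! (Suc i mod length (rev cs)) = cs ! j"
  proof -
    show "rev cs ! (Suc i mod length (rev cs)) = cs ! j"
      using i n by (simp add: rev_nth j_def)
    show "rev cs ! i = cs ! (Suc j mod ?n)"
    proof (cases "Suc i < ?n")
      case True
      then have "Suc j = ?n - 1 - i" using j_def by simp
      then show ?thesis using True i by (simp add: rev_nth)
    next
      case False
      then have "Suc i = ?n" using i by simp
      then have "j = ?n - 1" using j_def by simp
      then show ?thesis using \<open>Suc i = ?n\<close> n by (simp add: rev_nth)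
    qed
  qed
  ultimately show "(rev cs ! i, rev cs ! ((i + 1) mod length (rev cs))) \<in> A\<inverse>" by simp
qed



lemma matroid_exch:
  assumes "matroid E M" "B1 \<in> M" "B2 \<in> M" "x \<in> B1" "x \<notin> B2"
  obtains y where "y \<in> B2" "y \<notin> B1" "insert y (B1 - {x}) \<in> M"
  using assms unfolding matroid_def by blast

lemma key_exch:
  assumes m: "matroid E M" and B: "B \<in> M" and x1: "x1 \<in> B" and y1: "y1 \<notin> B"
    and B1: "insert y1 (B - {x1}) \<in> M" and y: "y \<notin> B" "y \<noteq> y1"
    and nb: "insert y (B - {x1}) \<notin> M" and x: "x \<in> B" "x \<noteq> x1"
  shows "insert y (B - {x}) \<in> M \<longleftrightarrow> insert y (insert y1 (B - {x1}) - {x}) \<in> M"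
proof
  assume D: "insert y (B - {x}) \<in> M"
  obtain z where z: "z \<in> insert y1 (B - {x1})" "z \<notin> insert y (B - {x})"
    "insert z (insert y (B - {x}) - {x1}) \<in> M"
    using matroid_exch[OF m D B1, of x1] x1 x y1 by auto
  from z(1,2) have "z = y1 \<or> z = x" using y by auto
  moreover have "insert x (insert y (B - {x}) - {x1}) = insert y (B - {x1})"
    using x x1 y by auto
  ultimately have "z = y1" using z(3) nb by auto
  moreover have "insert y1 (insert y (B - {x}) - {x1}) = insert y (insert y1 (B - {x1}) - {x})"
    using x x1 y y1 by auto
  ultimately show "insert y (insert y1 (B - {x1}) - {x}) \<in> M" using z(3) by simp
next
  assume D: "insert y (insert y1 (B - {x1}) - {x}) \<in> M"
  obtain z where z: "z \<in> B" "z \<notin> insert y (insert y1 (B - {x1}) - {x})"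
    "insert z (insert y (insert y1 (B - {x1}) - {x}) - {y1}) \<in> M"
    using matroid_exch[OF m D B, of y1] y1 y x by auto
  from z(1,2) have "z = x1 \<or> z = x" by auto
  moreover have "insert x (insert y (insert y1 (B - {x1}) - {x}) - {y1}) = insert y (B - {x1})"
    using x x1 y y1 by auto
  ultimately have "z = x1" using z(3) nb by auto
  moreover have "insert x1 (insert y (insert y1 (B - {x1}) - {x}) - {y1}) = insert y (B - {x})"
    using x x1 y y1 by auto
  ultimately show "insert y (B - {x}) \<in> M" using z(3) by simp
qed

lemma unique_matching_basis:
  assumes m: "matroid E M"
  shows "finite X \<Longrightarrow> B \<in> M \<Longrightarrow> X \<subseteq> B \<Longrightarrow> inj_on \<sigma> X \<Longrightarrow> \<sigma> ` X \<inter> B = {} \<Longrightarrow>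
    (\<forall>x\<in>X. insert (\<sigma> x) (B - {x}) \<in> M) \<Longrightarrow>
    (\<forall>X'\<subseteq>X. X' \<noteq> {} \<longrightarrow> (\<exists>x\<in>X'. \<forall>x'\<in>X' - {x}. insert (\<sigma> x') (B - {x}) \<notin> M)) \<Longrightarrow>
    (B - X) \<union> \<sigma> ` X \<in> M"
proof (induction X arbitrary: B rule: finite_psubset_induct)
  case (psubset X)
  show ?case
  proof (cases "X = {}")
    case True then show ?thesis using psubset.prems by simp
  next
    case False
    then obtain x where x: "x \<in> X" and xn: "\<forall>x'\<in>X - {x}. insert (\<sigma> x') (B - {x}) \<notin> M"
      using psubset.prems(6)[rule_format, of X] False by blast
    define B' where "B' = insert (\<sigma> x) (B - {x})"
    have B'M: "B' \<in> M" using psubset.prems(5) x B'_def by blast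
    have xB: "x \<in> B" using x psubset.prems(2) by blast
    have sxB: "\<sigma> x \<notin> B" using x psubset.prems(4) by blast
    have eq: "insert (\<sigma> x'') (B - {x'}) \<in> M \<longleftrightarrow> insert (\<sigma> x'') (B' - {x'}) \<in> M"
      if "x' \<in> X - {x}" "x'' \<in> X - {x}" for x' x''
    proof -
      have "x'' \<noteq> x" "x'' \<in> X" using that by auto
      then have "\<sigma> x'' \<noteq> \<sigma> x" using inj_on_eq_iff[OF psubset.prems(3)] x by blast
      moreover have "\<sigma> x'' \<notin> B" using that psubset.prems(4) by blast
      ultimately show ?thesis unfolding B'_def
        using key_exch[OF m psubset.prems(1) xB sxB B'M[unfolded B'_def], of "\<sigma> x''" x'] xn that
          psubset.prems(2) by blast
    qed
    have IH: "(B' - (X - {x})) \<union> \<sigma> ` (X - {x}) \<in> M"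
    proof (rule psubset.IH)
      show "X - {x} \<subset> X" using x by blast
      show "B' \<in> M" by (rule B'M)
      show "X - {x} \<subseteq> B'" using psubset.prems(2) B'_def by blast
      show "inj_on \<sigma> (X - {x})" using psubset.prems(3) by (auto intro: inj_on_subset)
      show "\<sigma> ` (X - {x}) \<inter> B' = {}"
        using psubset.prems(3,4) x unfolding B'_def inj_on_def by blast
      show "\<forall>x'\<in>X - {x}. insert (\<sigma> x') (B' - {x'}) \<in> M"
        using eq psubset.prems(5) by blast
      show "\<forall>X'\<subseteq>X - {x}. X' \<noteq> {} \<longrightarrow> (\<exists>x0\<in>X'. \<forall>x'\<in>X' - {x0}. insert (\<sigma> x') (B' - {x0}) \<notin> M)"
      proof (intro allI impI)
        fix X' assume X': "X' \<subseteq> X - {x}" "X' \<noteq> {}"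
        then obtain x0 where "x0 \<in> X'" "\<forall>x'\<in>X' - {x0}. insert (\<sigma> x') (B - {x0}) \<notin> M"
          using psubset.prems(6)[rule_format, of X'] by blast
        then show "\<exists>x0\<in>X'. \<forall>x'\<in>X' - {x0}. insert (\<sigma> x') (B' - {x0}) \<notin> M"
          using eq X' by blast
      qed
    qed
    have "(B' - (X - {x})) \<union> \<sigma> ` (X - {x}) = (B - X) \<union> \<sigma> ` X"
      using x xB sxB psubset.prems(2) unfolding B'_def by auto
    then show ?thesis using IH by simp
  qed
qed



lemma orbit_cycle:
  assumes fin: "finite V" and cl: "\<And>v. v \<in> V \<Longrightarrow> s v \<in> V" and v0: "v0 \<in> V"
  shows "\<exists>Z. Z \<noteq> [] \<and> distinct Z \<and> set Z \<subseteq> V \<and> rotate1 Z = map s Z"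
proof -
  have inV: "(s ^^ k) v \<in> V" if "v \<in> V" for k v
    using that by (induction k) (auto intro: cl)
  define f where "f k = (s ^^ k) v0" for k
  have "f ` {..card V} \<subseteq> V" using inV v0 f_def by auto
  then have "card (f ` {..card V}) \<le> card V" by (rule card_mono[OF fin])
  then have "\<not> inj_on f {..card V}"
    using card_image by fastforce
  then obtain i j where ij: "i \<le> card V" "j \<le> card V" "i \<noteq> j" "f i = f j"
    unfolding inj_on_def by auto
  then obtain a b where ab: "a < b" "f a = f b"
    by (metis nat_neq_iff)
  define u where "u = f a"
  have uV: "u \<in> V" using inV v0 u_def f_def by auto
  have per: "(s ^^ (b - a)) u = u"
  proof -
    have "(s ^^ (b - a)) u = (s ^^ (b - a + a)) v0" unfolding u_def f_def by (simp add: funpow_add)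
    also have "b - a + a = b" using ab by simp
    finally show ?thesis using ab unfolding u_def f_def by simp
  qed
  define P where "P p \<longleftrightarrow> 0 < p \<and> (s ^^ p) u = u" for p
  have Pex: "P (b - a)" using per ab P_def by auto
  define p where "p = (LEAST p. P p)"
  have Pp: "P p" unfolding p_def using Pex by (rule LeastI)
  have pmin: "\<And>q. P q \<Longrightarrow> p \<le> q" unfolding p_def by (rule Least_le)
  have p0: "0 < p" and pu: "(s ^^ p) u = u" using Pp P_def by auto
  define Z where "Z = map (\<lambda>k. (s ^^ k) u) [0..<p]"
  have "distinct Z"
    unfolding Z_def distinct_conv_nth
  proof (intro allI impI)
    fix i j assume ij: "i < length (map (\<lambda>k. (s ^^ k) u) [0..<p])" "j < length (map (\<lambda>k. (s ^^ k) u) [0..<p])" "i \<noteq> j"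
    show "map (\<lambda>k. (s ^^ k) u) [0..<p] ! i \<noteq> map (\<lambda>k. (s ^^ k) u) [0..<p] ! j"
    proof
      assume eq0: "map (\<lambda>k. (s ^^ k) u) [0..<p] ! i = map (\<lambda>k. (s ^^ k) u) [0..<p] ! j"
      have eq: "(s ^^ i) u = (s ^^ j) u" using eq0 ij by simp
      have gen: "False" if "x < y" "y < p" "(s ^^ x) u = (s ^^ y) u" for x y
      proof -
        have "(s ^^ (p - y + x)) u = (s ^^ (p - y)) ((s ^^ x) u)" by (simp add: funpow_add)
        also have "\<dots> = (s ^^ (p - y)) ((s ^^ y) u)" using that by simp
        also have "\<dots> = (s ^^ (p - y + y)) u" by (simp add: funpow_add)
        also have "p - y + y = p" using that by simp
        finally have h: "(s ^^ (p - y + x)) u = u" using pu by simp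
        have "(s ^^ (y - x)) u = (s ^^ (y - x)) ((s ^^ (p - y + x)) u)" using h by simp
        also have "\<dots> = (s ^^ (y - x + (p - y + x))) u" by (simp add: funpow_add)
        also have "y - x + (p - y + x) = p" using that by simp
        finally have "P (y - x)" using that pu P_def by simp
        then show False using pmin[of "y - x"] that by simp
      qed
      show False using ij eq gen by (cases "i < j") (auto, metis linorder_neqE_nat)
    qed
  qed
  moreover have "set Z \<subseteq> V" using inV uV Z_def by auto
  moreover have "Z \<noteq> []" using p0 Z_def by simp
  moreover have "rotate1 Z = map s Z"
  proof (rule nth_equalityI)
    show "length (rotate1 Z) = length (map s Z)" by simp
    have lZ: "length Z = p" by (simp add: Z_def)
    have Zn: "Z ! i = (s ^^ i) u" if "i < p" for i using that by (simp add: Z_def)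
    fix k assume k: "k < length (rotate1 Z)"
    then have kp: "k < p" using lZ by simp
    have r: "rotate1 Z ! k = Z ! (Suc k mod p)" using nth_rotate1[of k Z] kp lZ by simp
    have m: "map s Z ! k = (s ^^ Suc k) u" using Zn[OF kp] kp lZ by simp
    show "rotate1 Z ! k = map s Z ! k"
    proof (cases "Suc k < p")
      case True then show ?thesis using r m Zn by simp
    next
      case False then have pk: "Suc k = p" using kp by simp
      then show ?thesis using r m Zn[OF p0] pu by simp
    qed
  qed
  ultimately show ?thesis by blast
qed

lemma distinct_mset_subseteq:
  assumes "distinct xs" "set xs \<subseteq> set_mset M" shows "mset xs \<subseteq># M"
  unfolding subseteq_mset_def
proof
  fix a show "count (mset xs) a \<le> count M a"
    using assms distinct_count_atmost_1[of xs] by (cases "a \<in> set xs") auto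
qed

lemma find_cycle:
  assumes ne: "H \<noteq> {#}" and bal: "image_mset fst H = image_mset snd H"
  shows "\<exists>Z. Z \<noteq> [] \<and> distinct Z \<and> mset (arcsL Z) \<subseteq># H"
proof -
  define V where "V = snd ` set_mset H"
  have out: "\<exists>a. a \<in># H \<and> fst a = v" if "v \<in> V" for v
  proof -
    have "v \<in># image_mset snd H" using that V_def by auto
    then have "v \<in># image_mset fst H" using bal by simp
    then show ?thesis by auto
  qed
  define s where "s v = snd (SOME a. a \<in># H \<and> fst a = v)" for v
  have sH: "(v, s v) \<in># H" if "v \<in> V" for v
  proof -
    have "(SOME a. a \<in># H \<and> fst a = v) \<in># H \<and> fst (SOME a. a \<in># H \<and> fst a = v) = v"
      using someI_ex[OF out[OF that]] .
    then show ?thesis unfolding s_def by (metis prod.collapse)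
  qed
  have cl: "s v \<in> V" if "v \<in> V" for v using sH[OF that] V_def by force
  obtain v0 where "v0 \<in> V" using ne V_def by fastforce
  then obtain Z where Z: "Z \<noteq> []" "distinct Z" "set Z \<subseteq> V" "rotate1 Z = map s Z"
    using orbit_cycle[of V s v0] cl V_def by auto
  have ar: "arcsL Z = map (\<lambda>z. (z, s z)) Z" using Z(4) by (simp add: zip_map2 zip_same_conv_map)
  have "mset (arcsL Z) \<subseteq># H"
    unfolding ar
  proof (rule distinct_mset_subseteq)
    show "distinct (map (\<lambda>z. (z, s z)) Z)" using Z(2) by (simp add: distinct_map inj_on_def)
    show "set (map (\<lambda>z. (z, s z)) Z) \<subseteq> set_mset H" using Z(3) sH by auto
  qed
  then show ?thesis using Z by blast
qed

lemma decomp: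
  fixes G :: "('a\<times>'a) set" and lab :: "'a\<times>'a \<Rightarrow> 'g::ab_group_add"
  assumes zero: "\<And>Z. Z \<noteq> [] \<Longrightarrow> distinct Z \<Longrightarrow> set (arcsL Z) \<subseteq> G \<Longrightarrow> set Z \<subset> W \<Longrightarrow> sum_list (map lab (arcsL Z)) = 0"
    and full: "\<And>Z. Z \<noteq> [] \<Longrightarrow> distinct Z \<Longrightarrow> set (arcsL Z) \<subseteq> G \<Longrightarrow> set Z = W \<Longrightarrow> sum_list (map lab (arcsL Z)) = FW"
  shows "set_mset H \<subseteq> G \<Longrightarrow> snd ` set_mset H \<subseteq> W \<Longrightarrow> image_mset fst H = image_mset snd H \<Longrightarrow>
    \<exists>n. sum_mset (image_mset lab H) = sum_list (replicate n FW) \<and> (\<forall>v\<in>W. n \<le> count (image_mset snd H) v)"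
proof (induction "size H" arbitrary: H rule: less_induct)
  case less
  show ?case
  proof (cases "H = {#}")
    case True then show ?thesis by (intro exI[of _ 0]) simp
  next
    case False
    then obtain Z where Z: "Z \<noteq> []" "distinct Z" "mset (arcsL Z) \<subseteq># H"
      using find_cycle[OF False less.prems(3)] by blast
    define D where "D = mset (arcsL Z)"
    have DH: "D \<subseteq># H" using Z D_def by simp
    have Dne: "D \<noteq> {#}" using Z D_def by simp
    have sz: "size (H - D) < size H"
    proof -
      have "size (H - D) = size H - size D" using DH by (rule size_Diff_submset)
      moreover have "0 < size D" using Dne by (simp add: nonempty_has_size)
      moreover have "size D \<le> size H" using DH by (rule size_mset_mono)
      ultimately show ?thesis by linarith
    qed
    have fD: "image_mset fst D = mset Z" "image_mset snd D = mset Z"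
      using D_def by (simp_all flip: mset_map)
    have bal: "image_mset fst (H - D) = image_mset snd (H - D)"
      using DH less.prems(3) fD by (simp add: image_mset_Diff)
    obtain n where n: "sum_mset (image_mset lab (H - D)) = sum_list (replicate n FW)"
      "\<forall>v\<in>W. n \<le> count (image_mset snd (H - D)) v"
    proof -
      have sub: "set_mset (H - D) \<subseteq> set_mset H" by (meson in_diffD subsetI)
      have "set_mset (H - D) \<subseteq> G" using sub less.prems(1) by blast
      moreover have "snd ` set_mset (H - D) \<subseteq> W" using sub less.prems(2) by blast
      ultimately show ?thesis using less.hyps[OF sz] bal that by blast
    qed
    have ZH: "set (arcsL Z) \<subseteq> set_mset H" using Z(3) by (metis set_mset_mono set_mset_mset)
    have ZG: "set (arcsL Z) \<subseteq> G" using ZH less.prems(1) by blast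
    have sZ: "set Z = snd ` set (arcsL Z)"
      by (metis map_snd_zip length_rotate1 set_map set_rotate1)
    have ZW: "set Z \<subseteq> W" using sZ ZH less.prems(2) by blast
    have Hs: "H = (H - D) + D" using DH by simp
    have sumH: "sum_mset (image_mset lab H) = sum_mset (image_mset lab (H - D)) + sum_list (map lab (arcsL Z))"
      by (subst Hs) (simp add: D_def flip: mset_map sum_mset_sum_list)
    have cntH: "count (image_mset snd H) v = count (image_mset snd (H - D)) v + count (mset Z) v" for v
      by (subst Hs) (simp add: fD)
    show ?thesis
    proof (cases "set Z = W")
      case True
      have "sum_mset (image_mset lab H) = sum_list (replicate (Suc n) FW)"
        using sumH n full[OF Z(1,2) ZG True] by (simp add: add.commute)
      moreover have "\<forall>v\<in>W. Suc n \<le> count (image_mset snd H) v"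
        using n(2) cntH True Z(2) distinct_count_atmost_1[of Z] by auto
      ultimately show ?thesis by blast
    next
      case False
      then have "set Z \<subset> W" using ZW by auto
      then have "sum_mset (image_mset lab H) = sum_list (replicate n FW)"
        using sumH n zero[OF Z(1,2) ZG] by simp
      moreover have "\<forall>v\<in>W. n \<le> count (image_mset snd H) v"
        using n(2) cntH by (metis le_add1 order_trans)
      ultimately show ?thesis by blast
    qed
  qed
qed



lemma rot_mset:
  assumes "rotate1 Z = map \<phi> Z"
  shows "mset (map (\<lambda>z. g (\<phi> z)) Z) = mset (map g Z)"
proof -
  have "map (\<lambda>z. g (\<phi> z)) Z = map g (rotate1 Z)" using assms by simp
  also have "\<dots> = rotate1 (map g Z)" by (simp add: rotate1_map)
  finally show ?thesis by simp
qed

lemma part1: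
  fixes \<psi> :: "'a \<Rightarrow> 'g::ab_group_add"
  assumes no2: "\<forall>g::'g. g + g = 0 \<longrightarrow> g = 0"
    and m1: "matroid E M1" and B1: "B \<in> M1"
    and cyc: "dcycle (exch_arcs E M1 M2 B) C"
    and nz: "cycle_label B \<psi> C \<noteq> 0"
    and minimal: "\<forall>C'. dcycle (exch_arcs E M1 M2 B) C' \<and> cycle_label B \<psi> C' \<noteq> 0 \<longrightarrow> \<not> (set C' \<subset> set C)"
  shows "(B - set C) \<union> (set C - B) \<in> M1"
proof -
  define G where "G = exch_arcs E M1 M2 B"
  define W where "W = set C"
  define FW where "FW = cycle_label B \<psi> C"
  define lab where "lab = arc_label B \<psi>"
  have BE: "B \<subseteq> E" using m1 B1 unfolding matroid_def by blast
  have Cne: "C \<noteq> []" and Cd: "distinct C" and CG: "set (arcsL C) \<subseteq> G"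
    using cyc by (auto simp: dcycle_alt G_def)
  define nxt where "nxt v = the (map_of (arcsL C) v)" for v
  have nxt_nth: "nxt (C ! i) = rotate1 C ! i" if "i < length C" for i
    using that Cd by (simp add: nxt_def map_of_zip_nth)
  have arcC: "(v, nxt v) \<in> set (arcsL C)" if "v \<in> W" for v
  proof -
    have "v \<in> set C" using that W_def by simp
    then obtain i where i: "i < length C" "v = C ! i" by (metis in_set_conv_nth)
    then have "arcsL C ! i = (v, nxt v)" using nxt_nth by simp
    moreover have "i < length (arcsL C)" using i by simp
    ultimately show ?thesis by (metis nth_mem)
  qed
  have arcG: "(v, nxt v) \<in> G" if "v \<in> W" for v using arcC[OF that] CG by blast
  have nxtW: "nxt v \<in> W" if "v \<in> W" for v
    using arcC[OF that] W_def by (metis set_rotate1 set_zip_rightD)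
  have injnxt: "inj_on nxt W"
  proof (rule inj_onI)
    fix u v assume uv: "u \<in> W" "v \<in> W" "nxt u = nxt v"
    have "u \<in> set C" "v \<in> set C" using uv W_def by simp_all
    then obtain i j where i: "i < length C" "u = C ! i" and j: "j < length C" "v = C ! j"
      by (metis in_set_conv_nth)
    have "rotate1 C ! i = rotate1 C ! j" using uv(3) i j nxt_nth by simp
    then have "i = j" using i j Cd by (simp add: nth_eq_iff_index_eq)
    then show "u = v" using i j by simp
  qed
  have WE: "W \<subseteq> E"
  proof
    fix v assume "v \<in> W"
    then have "(v, nxt v) \<in> exch_arcs E M1 M2 B" using arcG G_def by simp
    then show "v \<in> E" using exch_arc_E[OF _ BE] by blast
  qed
  have finW: "finite W" using W_def by simp
  have zero: "sum_list (map lab (arcsL Z)) = 0"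
    if "Z \<noteq> []" "distinct Z" "set (arcsL Z) \<subseteq> G" "set Z \<subset> W" for Z
  proof -
    have "dcycle (exch_arcs E M1 M2 B) Z" using that G_def by (simp add: dcycle_alt)
    then have "cycle_label B \<psi> Z = 0" using minimal that(4) W_def by blast
    then show ?thesis by (simp add: cycle_label_alt lab_def)
  qed
  have full: "sum_list (map lab (arcsL Z)) = FW"
    if "Z \<noteq> []" "distinct Z" "set (arcsL Z) \<subseteq> G" "set Z = W" for Z
  proof -
    have "dcycle (exch_arcs E M1 M2 B) Z" using that G_def by (simp add: dcycle_alt)
    then have "cycle_label B \<psi> Z = cycle_label B \<psi> C"
      using label_vertex[of E M1 M2 B] cyc that(4) W_def by metis
    then show ?thesis by (simp add: cycle_label_alt lab_def FW_def)
  qed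
  note dec = decomp[where G=G and W=W and lab=lab and FW=FW, OF zero full]
  define X where "X = W \<inter> B"
  have key: "\<forall>X'\<subseteq>X. X' \<noteq> {} \<longrightarrow> (\<exists>x\<in>X'. \<forall>x'\<in>X' - {x}. insert (nxt x') (B - {x}) \<notin> M1)"
  proof (rule ccontr)
    assume "\<not> ?thesis"
    then obtain X' where X': "X' \<subseteq> X" "X' \<noteq> {}"
      and ch0: "\<not> (\<exists>x\<in>X'. \<forall>x'\<in>X' - {x}. insert (nxt x') (B - {x}) \<notin> M1)" by blast
    have ch: "\<forall>x\<in>X'. \<exists>x'\<in>X' - {x}. insert (nxt x') (B - {x}) \<in> M1"
      using ch0 by blast
    define nx where "nx x = (SOME x'. x' \<in> X' - {x} \<and> insert (nxt x') (B - {x}) \<in> M1)" for x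
    have nxP: "nx x \<in> X' - {x} \<and> insert (nxt (nx x)) (B - {x}) \<in> M1" if "x \<in> X'" for x
    proof -
      have "\<exists>x'. x' \<in> X' - {x} \<and> insert (nxt x') (B - {x}) \<in> M1" using ch that by blast
      from someI_ex[OF this] show ?thesis unfolding nx_def .
    qed
    obtain x0 where "x0 \<in> X'" using X' by blast
    moreover have "finite X'" using X' X_def finW by (meson finite_Int finite_subset)
    ultimately obtain Z where Z: "Z \<noteq> []" "distinct Z" "set Z \<subseteq> X'" "rotate1 Z = map nx Z"
      using orbit_cycle[of X' nx x0] nxP by blast
    have ZB: "z \<in> B" "z \<in> W" "nx z \<in> W" "nx z \<noteq> z" if "z \<in> set Z" for z
      using that Z(3) X'(1) nxP X_def by auto
    have chord: "(z, nxt (nx z)) \<in> G" if "z \<in> set Z" for z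
    proof -
      have a: "(nx z, nxt (nx z)) \<in> exch_arcs E M1 M2 B" using arcG ZB[OF that] G_def by simp
      have "nx z \<in> B" using nxP that Z(3) X'(1) X_def by auto
      then have "nxt (nx z) \<notin> B" using exch_arc_B[OF a] by blast
      moreover have "nxt (nx z) \<in> E" using nxtW ZB[OF that] WE by blast
      moreover have "insert (nxt (nx z)) (B - {z}) \<in> M1" using nxP that Z(3) by blast
      ultimately show ?thesis unfolding G_def exch_arcs_def using ZB[OF that] by blast
    qed
    define CA where "CA = mset (arcsL C)"
    define A where "A = mset (map (\<lambda>z. (z, nxt (nx z))) Z)"
    define N where "N = mset (map (\<lambda>z. (z, nxt z)) Z)"
    define H where "H = CA + CA + A - N"
    have NCA: "N \<subseteq># CA" unfolding N_def CA_def
    proof (rule distinct_mset_subseteq)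
      show "distinct (map (\<lambda>z. (z, nxt z)) Z)" using Z(2) by (simp add: distinct_map inj_on_def)
      show "set (map (\<lambda>z. (z, nxt z)) Z) \<subseteq> set_mset (mset (arcsL C))" using arcC ZB by auto
    qed
    have NH: "N \<subseteq># CA + CA + A"
      using NCA by (metis add.assoc mset_subset_eq_add_left subset_mset.order_trans)
    have img: "image_mset f H = image_mset f CA + image_mset f CA"
      if "image_mset f A = image_mset f N" for f :: "'a \<times> 'a \<Rightarrow> 'c"
      unfolding H_def using NH that by (simp add: image_mset_Diff)
    have imgfst: "image_mset fst A = image_mset fst N" unfolding A_def N_def by (simp flip: mset_map add: comp_def)
    have imgsnd: "image_mset snd A = image_mset snd N" unfolding A_def N_def
      using rot_mset[OF Z(4), of nxt] by (simp flip: mset_map add: comp_def)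
    have imglab: "image_mset lab A = image_mset lab N"
    proof -
      have e1: "map (lab \<circ> (\<lambda>z. (z, nxt (nx z)))) Z = map (\<lambda>z. \<psi> (nxt (nx z))) Z"
        using ZB by (auto simp: lab_def arc_label_def)
      have e2: "map (lab \<circ> (\<lambda>z. (z, nxt z))) Z = map (\<lambda>z. \<psi> (nxt z)) Z"
        using ZB by (auto simp: lab_def arc_label_def)
      have r: "mset (map (\<lambda>z. \<psi> (nxt (nx z))) Z) = mset (map (\<lambda>z. \<psi> (nxt z)) Z)"
        by (rule rot_mset[OF Z(4)])
      show ?thesis unfolding A_def N_def by (simp only: mset_map[symmetric] map_map e1 e2 r)
    qed
    have CAfst: "image_mset fst CA = mset C" and CAsnd: "image_mset snd CA = mset C"
      unfolding CA_def by (simp_all flip: mset_map)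
    have Hfst: "image_mset fst H = mset C + mset C" using img[OF imgfst] CAfst by simp
    have Hsnd: "image_mset snd H = mset C + mset C" using img[OF imgsnd] CAsnd by simp
    have sumH: "sum_mset (image_mset lab H) = FW + FW"
      using img[OF imglab] by (simp add: CA_def FW_def cycle_label_alt lab_def flip: mset_map sum_mset_sum_list)
    have cntH: "count (image_mset lab H) a = count (image_mset lab H) a" for a by simp
    have inH: "set_mset CA \<union> set_mset A \<subseteq> set_mset H"
    proof
      fix a assume "a \<in> set_mset CA \<union> set_mset A"
      then have "0 < count CA a \<or> 0 < count A a" by auto
      moreover have "count N a \<le> count CA a" using NCA by (simp add: mset_subset_eq_count)
      moreover have "count H a = count CA a + count CA a + count A a - count N a" unfolding H_def by simp
      ultimately have "count H a > 0" by linarith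
      then show "a \<in> set_mset H" by simp
    qed
    have HG: "set_mset H \<subseteq> G"
    proof -
      have "set_mset H \<subseteq> set_mset (CA + CA + A)" unfolding H_def by (meson in_diffD subsetI)
      also have "\<dots> \<subseteq> G" using CG chord unfolding CA_def A_def by auto
      finally show ?thesis .
    qed
    have HW: "snd ` set_mset H \<subseteq> W"
    proof
      fix v assume "v \<in> snd ` set_mset H"
      then have "v \<in># image_mset snd H" by simp
      then show "v \<in> W" using Hsnd W_def by simp
    qed
    obtain t where t: "t \<in> set Z" using Z(1) by (cases Z) auto
    define s' where "s' = nxt(t := nxt (nx t))"
    have s'W: "s' v \<in> W" if "v \<in> W" for v using that nxtW ZB[OF t] s'_def by auto
    obtain ZD where ZD: "ZD \<noteq> []" "distinct ZD" "set ZD \<subseteq> W" "rotate1 ZD = map s' ZD"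
      using orbit_cycle[of W s' t] finW s'W ZB[OF t] by blast
    have notin: "nxt t \<notin> set ZD"
    proof
      assume "nxt t \<in> set ZD"
      then have "nxt t \<in> set (map s' ZD)" using ZD(4) by (metis set_rotate1)
      then obtain w where w: "w \<in> set ZD" "s' w = nxt t" by auto
      show False
      proof (cases "w = t")
        case True
        then have "nxt (nx t) = nxt t" using w s'_def by simp
        then have "nx t = t" using injnxt ZB[OF t] by (meson inj_onD)
        then show False using ZB[OF t] by simp
      next
        case False
        then have "nxt w = nxt t" using w s'_def by simp
        then have "w = t" using injnxt ZB[OF t] w ZD(3) by (meson inj_onD subsetD)
        then show False using False by simp
      qed
    qed
    have arD: "arcsL ZD = map (\<lambda>z. (z, s' z)) ZD" using ZD(4) by (simp add: zip_map2 zip_same_conv_map)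
    define D where "D = mset (arcsL ZD)"
    have DsubH: "set (arcsL ZD) \<subseteq> set_mset H"
    proof
      fix a assume "a \<in> set (arcsL ZD)"
      then obtain z where z: "z \<in> set ZD" "a = (z, s' z)" using arD by auto
      show "a \<in> set_mset H"
      proof (cases "z = t")
        case True
        then have "a \<in> set_mset A" using z t s'_def A_def by auto
        then show ?thesis using inH by blast
      next
        case False
        then have "a \<in> set_mset CA" using z arcC ZD(3) s'_def CA_def by auto
        then show ?thesis using inH by blast
      qed
    qed
    have DH: "D \<subseteq># H" unfolding D_def
    proof (rule distinct_mset_subseteq)
      show "distinct (arcsL ZD)" using ZD(2) by (simp add: distinct_zipI1)
    qed (rule DsubH)
    have DG: "set (arcsL ZD) \<subseteq> G" using DsubH HG by blast
    have "set ZD \<subset> W" using ZD(3) notin nxtW ZB[OF t] by blast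
    then have sumD: "sum_list (map lab (arcsL ZD)) = 0" using zero ZD(1,2) DG by blast
    define H' where "H' = H - D"
    have Hs: "H = H' + D" using DH H'_def by simp
    have fD: "image_mset fst D = mset ZD" "image_mset snd D = mset ZD"
      using D_def by (simp_all flip: mset_map)
    have bal: "image_mset fst H' = image_mset snd H'"
      using DH Hfst Hsnd fD H'_def by (simp add: image_mset_Diff)
    have sub: "set_mset H' \<subseteq> set_mset H" unfolding H'_def by (meson in_diffD subsetI)
    obtain n where n: "sum_mset (image_mset lab H') = sum_list (replicate n FW)"
      "\<forall>v\<in>W. n \<le> count (image_mset snd H') v"
      using dec[of H'] sub HG HW bal by blast
    have "sum_mset (image_mset lab H) = sum_mset (image_mset lab H') + sum_list (map lab (arcsL ZD))"
      by (subst Hs) (simp add: D_def flip: mset_map sum_mset_sum_list)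
    then have sH': "sum_list (replicate n FW) = FW + FW" using sumH sumD n(1) by simp
    obtain v where v: "v \<in> set ZD" using ZD(1) by (cases ZD) auto
    have "count (image_mset snd H) v = count (image_mset snd H') v + count (mset ZD) v"
      by (subst Hs) (simp add: fD)
    moreover have "count (image_mset snd H) v = 2" using Hsnd v ZD(3) W_def Cd
      by (simp add: distinct_count_atmost_1[THEN iffD1, OF Cd] subsetD)
    moreover have "count (mset ZD) v = 1" using v ZD(2) by (simp add: distinct_count_atmost_1[THEN iffD1, OF ZD(2)])
    ultimately have "n \<le> 1" using n(2) v ZD(3) by force
    have "FW + FW = 0"
    proof (cases "n = 0")
      case True then show ?thesis using sH' by simp
    next
      case False then have "n = 1" using \<open>n \<le> 1\<close> by simp
      then have "FW + 0 = FW + FW" using sH' by simp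
      then have "FW = 0" by (metis add_left_imp_eq)
      then show ?thesis by simp
    qed
    then have "FW = 0" using no2 by blast
    then show False using nz FW_def by simp
  qed
  have XW: "X \<subseteq> W" and XB: "X \<subseteq> B" using X_def by auto
  have nxtnB: "nxt x \<notin> B" if "x \<in> X" for x
    using arcG[of x] that X_def exch_arc_B[of x "nxt x" E M1 M2 B] G_def by auto
  have M: "(B - X) \<union> nxt ` X \<in> M1"
  proof (rule unique_matching_basis[OF m1])
    show "finite X" using finW XW by (rule finite_subset[rotated])
    show "inj_on nxt X" using injnxt XW by (rule inj_on_subset)
    show "nxt ` X \<inter> B = {}" using nxtnB by auto
    show "\<forall>x\<in>X. insert (nxt x) (B - {x}) \<in> M1"
      using arcG X_def exch_arc_B[of _ _ E M1 M2 B] G_def by auto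
  qed (use B1 XB key in auto)
  have "nxt ` X = W - B"
  proof
    show "nxt ` X \<subseteq> W - B" using nxtW nxtnB XW by auto
    show "W - B \<subseteq> nxt ` X"
    proof
      fix y assume y: "y \<in> W - B"
      then have "y \<in> set (rotate1 C)" using W_def by simp
      then obtain i where i: "i < length C" "y = rotate1 C ! i" by (metis in_set_conv_nth length_rotate1)
      then have ny: "nxt (C ! i) = y" using nxt_nth by simp
      have ci: "C ! i \<in> W" using i W_def by simp
      have "(C ! i, y) \<in> exch_arcs E M1 M2 B" using arcG[OF ci] ny G_def by simp
      then have "C ! i \<in> B" using y by (metis DiffD2 exch_arc_nB)
      then show "y \<in> nxt ` X" using ci ny X_def by blast
    qed
  qed
  moreover have "B - X = B - W" using X_def by auto
  ultimately show ?thesis using M W_def by simp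
qed



theorem lemma3p7:
  fixes E :: "'a set" and M1 M2 :: "'a set set" and \<psi> :: "'a \<Rightarrow> 'g::ab_group_add"
    and B :: "'a set" and C :: "'a list"
  assumes no_two_torsion: "\<forall>g::'g. g + g = 0 \<longrightarrow> g = 0"
    and m1: "matroid E M1" and m2: "matroid E M2"
    and B1: "B \<in> M1" and B2: "B \<in> M2"
    and cyc: "dcycle (exch_arcs E M1 M2 B) C"
    and nz: "cycle_label B \<psi> C \<noteq> 0"
    and minimal: "\<forall>C'. dcycle (exch_arcs E M1 M2 B) C' \<and> cycle_label B \<psi> C' \<noteq> 0
                     \<longrightarrow> \<not> (set C' \<subset> set C)"
  shows "(B - set C) \<union> (set C - B) \<in> M1 \<and> (B - set C) \<union> (set C - B) \<in> M2"
proof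
  show "(B - set C) \<union> (set C - B) \<in> M1"
    by (rule part1[OF no_two_torsion m1 B1 cyc nz minimal])
  have conv: "exch_arcs E M2 M1 B = (exch_arcs E M1 M2 B)\<inverse>" by (rule exch_arcs_conv)
  have conv': "exch_arcs E M1 M2 B = (exch_arcs E M2 M1 B)\<inverse>" by (rule exch_arcs_conv)
  have cyc': "dcycle (exch_arcs E M2 M1 B) (rev C)"
    unfolding conv by (rule dcycle_rev[OF cyc])
  have lab: "cycle_label B \<psi> (rev C') = cycle_label B \<psi> C'"
    if "dcycle (exch_arcs E M2 M1 B) C'" for C'
  proof -
    have "dcycle (exch_arcs E M1 M2 B) (rev C')"
      unfolding conv' by (rule dcycle_rev[OF that])
    then show ?thesis using label_vertex[OF that, where \<psi>=\<psi>] label_vertex[of E M1 M2 B "rev C'" \<psi>] by simp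
  qed
  have nz': "cycle_label B \<psi> (rev C) \<noteq> 0"
    using lab[OF cyc'] nz by simp
  have minimal': "\<forall>C'. dcycle (exch_arcs E M2 M1 B) C' \<and> cycle_label B \<psi> C' \<noteq> 0
                     \<longrightarrow> \<not> (set C' \<subset> set (rev C))"
  proof (intro allI impI)
    fix C' assume h: "dcycle (exch_arcs E M2 M1 B) C' \<and> cycle_label B \<psi> C' \<noteq> 0"
    have "dcycle (exch_arcs E M1 M2 B) (rev C')"
      unfolding conv' using dcycle_rev[of "exch_arcs E M2 M1 B" C'] h by simp
    moreover have "cycle_label B \<psi> (rev C') \<noteq> 0" using lab h by simp
    ultimately have "\<not> (set (rev C') \<subset> set C)" using minimal by blast
    then show "\<not> (set C' \<subset> set (rev C))" by simp
  qed
  have "(B - set (rev C)) \<union> (set (rev C) - B) \<in> M2"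
    by (rule part1[OF no_two_torsion m2 B2 cyc' nz' minimal'])
  then show "(B - set C) \<union> (set C - B) \<in> M2" by simp
qed


end
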